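(* Let $n\ge 1$, let $B=(b_{ij})\in\mathbb{Z}^{n\times n}$ be nonsingular, $M=\max_{i,j}|b_{ij}|$, and let $B_\epsilon$, $\epsilon_1,\dots,\epsilon_{n+1}$, $p$ be as constructed in the context. Then $S_{B_\epsilon}\subseteq S_B$. Moreover, for every $x\in S_{B_\epsilon}$, writing $c(x)=\sum_{i=1}^n b_{1i}x_i$, $$\lambda_1(L(B_\epsilon))^2=\|Bx\|^2\epsilon_{n+1}^2+\sum_{i=1}^n x_i^2\epsilon_i^2+\sum_{i=1}^n 2c(x)x_i\,\epsilon_{n+1}\epsilon_i+\sum_{1\le i<j\le n}2x_ix_j\,\epsilon_i\epsilon_j,$$ where each of the integers $\|Bx\|^2$, $x_i^2$, $2c(x)x_i$, $2x_ix_j$ lies in $[-\lfloor p/2\rfloor,\lfloor p/2\rfloor]$ and the products $\epsilon_i\epsilon_j$ ($1\le i\le j\le n+1$) are pairwise distinct powers of $p$.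
   Context: For a nonsingular $B\in\mathbb{R}^{n\times n}$, $L(B)$ is the lattice spanned by its columns, $\lambda_1(L(B))$ is the Euclidean length of a shortest nonzero lattice vector, and $S_B=\{x\in\mathbb{Z}^n : \|Bx\|=\lambda_1(L(B))\}$. Construction: Put $M_1=2(M+1)^n n^n$, $M_2=(M+1)n$ and $p=2\max\{M_2^2,\,2M_1M_2,\,2M_1^2\}+1$. Let $a_1<a_2<\dots<a_{n+1}$ be positive integers such that all sums $a_i+a_j$ ($1\le i\le j\le n+1$) are pairwise distinct and $a_{n+1}-a_n\ge 2$ (for instance $a_k=((n+1)^2+k-1)^2$). Set $\epsilon_i=p^{a_i}$ for $i=1,\dots,n+1$, and $B_\epsilon=\epsilon_{n+1}B+E$, where $E\in\mathbb{Z}^{n\times n}$ has first row $(\epsilon_1,\dots,\epsilon_n)$ and all other rows zero. *)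

theory Defs
  imports "HOL-Analysis.Analysis"
begin

text \<open>Convention: an n x n integer matrix is a function B :: nat => nat => int, only the
entries B i j with i, j in {1..n} matter.\<close>

definition zvecs :: "nat \<Rightarrow> (nat \<Rightarrow> int) set" where
  "zvecs n = {x. \<forall>i. i \<notin> {1..n} \<longrightarrow> x i = 0}"

definition det_n :: "nat \<Rightarrow> (nat \<Rightarrow> nat \<Rightarrow> int) \<Rightarrow> int" where
  "det_n n B = (\<Sum>q | q permutes {1..n}. of_int (sign q) * (\<Prod>i=1..n. B i (q i)))"

definition nonsingular :: "nat \<Rightarrow> (nat \<Rightarrow> nat \<Rightarrow> int) \<Rightarrow> bool" where
  "nonsingular n B \<longleftrightarrow> det_n n B \<noteq> 0"

definition matvec :: "nat \<Rightarrow> (nat \<Rightarrow> nat \<Rightarrow> int) \<Rightarrow> (nat \<Rightarrow> int) \<Rightarrow> nat \<Rightarrow> int" where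
  "matvec n B x i = (\<Sum>j=1..n. B i j * x j)"

definition normsq :: "nat \<Rightarrow> (nat \<Rightarrow> nat \<Rightarrow> int) \<Rightarrow> (nat \<Rightarrow> int) \<Rightarrow> int" where
  "normsq n B x = (\<Sum>i=1..n. (matvec n B x i)^2)"

definition vlen :: "nat \<Rightarrow> (nat \<Rightarrow> nat \<Rightarrow> int) \<Rightarrow> (nat \<Rightarrow> int) \<Rightarrow> real" where
  "vlen n B x = sqrt (real_of_int (normsq n B x))"

definition lambda1 :: "nat \<Rightarrow> (nat \<Rightarrow> nat \<Rightarrow> int) \<Rightarrow> real" where
  "lambda1 n B = Inf {vlen n B x | x. x \<in> zvecs n \<and> (\<exists>i\<in>{1..n}. matvec n B x i \<noteq> 0)}"

definition SB :: "nat \<Rightarrow> (nat \<Rightarrow> nat \<Rightarrow> int) \<Rightarrow> (nat \<Rightarrow> int) set" where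
  "SB n B = {x \<in> zvecs n. vlen n B x = lambda1 n B}"

definition maxentry :: "nat \<Rightarrow> (nat \<Rightarrow> nat \<Rightarrow> int) \<Rightarrow> int" where
  "maxentry n B = Max {\<bar>B i j\<bar> | i j. i \<in> {1..n} \<and> j \<in> {1..n}}"

definition constM1 :: "nat \<Rightarrow> int \<Rightarrow> int" where
  "constM1 n M = 2 * (M + 1)^n * (int n)^n"

definition constM2 :: "nat \<Rightarrow> int \<Rightarrow> int" where
  "constM2 n M = (M + 1) * int n"

definition constp :: "nat \<Rightarrow> int \<Rightarrow> int" where
  "constp n M = 2 * Max {(constM2 n M)^2, 2 * constM1 n M * constM2 n M, 2 * (constM1 n M)^2} + 1"

definition admissible_exps :: "nat \<Rightarrow> (nat \<Rightarrow> nat) \<Rightarrow> bool" where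
  "admissible_exps n a \<longleftrightarrow>
     (\<forall>i\<in>{1..n+1}. a i > 0) \<and>
     (\<forall>i\<in>{1..n+1}. \<forall>j\<in>{1..n+1}. i < j \<longrightarrow> a i < a j) \<and>
     (\<forall>i j k l. 1 \<le> i \<and> i \<le> j \<and> j \<le> n+1 \<and> 1 \<le> k \<and> k \<le> l \<and> l \<le> n+1 \<and> (i,j) \<noteq> (k,l)
        \<longrightarrow> a i + a j \<noteq> a k + a l) \<and>
     a (n+1) \<ge> a n + 2"

definition Beps :: "nat \<Rightarrow> (nat \<Rightarrow> nat \<Rightarrow> int) \<Rightarrow> (nat \<Rightarrow> int) \<Rightarrow> nat \<Rightarrow> nat \<Rightarrow> int" where
  "Beps n B eps i j = eps (n+1) * B i j + (if i = 1 then eps j else 0)"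

end

theory Submission
  imports Defs
begin


definition repl :: "(nat \<Rightarrow> nat \<Rightarrow> int) \<Rightarrow> nat \<Rightarrow> (nat \<Rightarrow> int) \<Rightarrow> nat \<Rightarrow> nat \<Rightarrow> int" where
  "repl A j v = (\<lambda>i l. if l = j then v i else A i l)"

lemma det_ident_cols:
  assumes j: "j \<in> {1..n}" and k: "k \<in> {1..n}" and jk: "j \<noteq> k"
    and eq: "\<And>i. A i j = A i k"
  shows "det_n n A = 0"
proof -
  let ?S = "{1..n::nat}"
  let ?P = "{q. q permutes ?S}"
  define t where "t = Transposition.transpose j k"
  have tp: "t permutes ?S" unfolding t_def using j k by (rule permutes_swap_id)
  have tt: "t \<circ> t = id" unfolding t_def by (simp add: fun_eq_iff)
  have At: "A i (t l) = A i l" for i l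
    unfolding t_def using eq by (auto simp: Transposition.transpose_def)
  let ?g = "\<lambda>q. of_int (sign q) * (\<Prod>i=1..n. A i (q i))"
  have "det_n n A = (\<Sum>q\<in>?P. ?g (t \<circ> q))"
    unfolding det_n_def
    by (rule sum.reindex_bij_witness[where i="\<lambda>q. t \<circ> q" and j="\<lambda>q. t \<circ> q"])
       (use tp in \<open>auto simp: comp_assoc[symmetric] tt intro: permutes_compose\<close>)
  also have "\<dots> = (\<Sum>q\<in>?P. - ?g q)"
  proof (rule sum.cong[OF refl])
    fix q assume "q \<in> ?P"
    then have qp: "permutation q" using permutation_permutes by blast
    have tpp: "permutation t" using tp permutation_permutes by blast
    have "sign (t \<circ> q) = - sign q"
      using sign_compose[OF tpp qp] jk by (simp add: t_def sign_swap_id)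
    then show "?g (t \<circ> q) = - ?g q" by (simp add: At)
  qed
  also have "\<dots> = - det_n n A" unfolding det_n_def by (simp add: sum_negf)
  finally show ?thesis by simp
qed

lemma prod_repl:
  assumes q: "q permutes {1..n}" and j: "j \<in> {1..n}"
  shows "(\<Prod>i=1..n. repl A j v i (q i)) = v (inv q j) * (\<Prod>i\<in>{1..n} - {inv q j}. A i (q i))"
proof -
  let ?r = "inv q j"
  have r: "?r \<in> {1..n}" using permutes_in_image[OF permutes_inv[OF q]] j by blast
  have qr: "q ?r = j" using q by (simp add: permutes_inverses)
  have "(\<Prod>i=1..n. repl A j v i (q i)) = repl A j v ?r (q ?r) * (\<Prod>i\<in>{1..n} - {?r}. repl A j v i (q i))"
    using r by (simp add: prod.remove)
  also have "(\<Prod>i\<in>{1..n} - {?r}. repl A j v i (q i)) = (\<Prod>i\<in>{1..n} - {?r}. A i (q i))"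
  proof (rule prod.cong[OF refl])
    fix i assume "i \<in> {1..n} - {?r}"
    then have "q i \<noteq> j" using qr permutes_inj[OF q] by (metis DiffE injD singletonI)
    then show "repl A j v i (q i) = A i (q i)" by (simp add: repl_def)
  qed
  finally show ?thesis using qr by (simp add: repl_def)
qed

lemma det_lin:
  assumes j: "j \<in> {1..n}"
  shows "det_n n (repl B j (\<lambda>i. \<Sum>k=1..n. B i k * x k)) = (\<Sum>k=1..n. x k * det_n n (repl B j (\<lambda>i. B i k)))"
proof -
  let ?P = "{q. q permutes {1..n::nat}}"
  let ?R = "\<lambda>q. (\<Prod>i\<in>{1..n} - {inv q j}. B i (q i))"
  have "det_n n (repl B j (\<lambda>i. \<Sum>k=1..n. B i k * x k))
      = (\<Sum>q\<in>?P. sign q * ((\<Sum>k=1..n. B (inv q j) k * x k) * ?R q))"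
    unfolding det_n_def by (rule sum.cong[OF refl]) (simp add: prod_repl[OF _ j] del: One_nat_def)
  also have "\<dots> = (\<Sum>q\<in>?P. \<Sum>k=1..n. x k * (sign q * (B (inv q j) k * ?R q)))"
    by (rule sum.cong[OF refl]) (simp add: sum_distrib_left sum_distrib_right algebra_simps)
  also have "\<dots> = (\<Sum>k=1..n. x k * (\<Sum>q\<in>?P. sign q * (B (inv q j) k * ?R q)))"
    by (subst sum.swap) (simp add: sum_distrib_left)
  also have "\<dots> = (\<Sum>k=1..n. x k * det_n n (repl B j (\<lambda>i. B i k)))"
    unfolding det_n_def by (rule sum.cong[OF refl]) (simp add: prod_repl[OF _ j] del: One_nat_def)
  finally show ?thesis .
qed

lemma cramer:
  assumes j: "j \<in> {1..n}"
  shows "det_n n (repl B j (matvec n B x)) = x j * det_n n B"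
proof -
  have mv: "matvec n B x = (\<lambda>i. \<Sum>k=1..n. B i k * x k)" by (simp add: fun_eq_iff matvec_def)
  have "det_n n (repl B j (matvec n B x)) = (\<Sum>k=1..n. x k * det_n n (repl B j (\<lambda>i. B i k)))"
    unfolding mv by (rule det_lin[OF j])
  also have "\<dots> = x j * det_n n (repl B j (\<lambda>i. B i j)) + (\<Sum>k\<in>{1..n}-{j}. x k * det_n n (repl B j (\<lambda>i. B i k)))"
    using j by (simp add: sum.remove)
  also have "(\<Sum>k\<in>{1..n}-{j}. x k * det_n n (repl B j (\<lambda>i. B i k))) = 0"
  proof (rule sum.neutral, rule ballI)
    fix k assume k: "k \<in> {1..n} - {j}"
    have "det_n n (repl B j (\<lambda>i. B i k)) = 0"
      by (rule det_ident_cols[of j n k]) (use j k in \<open>auto simp: repl_def\<close>)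
    then show "x k * det_n n (repl B j (\<lambda>i. B i k)) = 0" by simp
  qed
  also have "repl B j (\<lambda>i. B i j) = B" by (simp add: repl_def fun_eq_iff)
  finally show ?thesis by simp
qed

lemma det_bound:
  assumes j: "j \<in> {1..n}" and v: "\<And>i. i \<in> {1..n} \<Longrightarrow> \<bar>v i\<bar> \<le> m"
    and A: "\<And>i l. i \<in> {1..n} \<Longrightarrow> l \<in> {1..n} \<Longrightarrow> \<bar>A i l\<bar> \<le> M0"
    and M0: "0 \<le> M0"
  shows "\<bar>det_n n (repl A j v)\<bar> \<le> fact n * M0^(n-1) * m"
proof -
  let ?P = "{q. q permutes {1..n::nat}}"
  have each: "\<bar>of_int (sign q) * (\<Prod>i=1..n. repl A j v i (q i))\<bar> \<le> M0^(n-1) * m" if q: "q \<in> ?P" for q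
  proof -
    have qp: "q permutes {1..n}" using q by simp
    let ?r = "inv q j"
    have r: "?r \<in> {1..n}" using permutes_in_image[OF permutes_inv[OF qp]] j by blast
    have "\<bar>(\<Prod>i\<in>{1..n} - {?r}. A i (q i))\<bar> = (\<Prod>i\<in>{1..n} - {?r}. \<bar>A i (q i)\<bar>)" by (simp add: abs_prod)
    also have "\<dots> \<le> (\<Prod>i\<in>{1..n} - {?r}. M0)"
      by (rule prod_mono) (use A permutes_in_image[OF qp] in auto)
    also have "\<dots> = M0^(n-1)" using r by simp
    finally have R: "\<bar>(\<Prod>i\<in>{1..n} - {?r}. A i (q i))\<bar> \<le> M0^(n-1)" .
    have "\<bar>of_int (sign q) * (\<Prod>i=1..n. repl A j v i (q i))\<bar> = \<bar>v ?r\<bar> * \<bar>(\<Prod>i\<in>{1..n} - {?r}. A i (q i))\<bar>"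
      by (simp add: prod_repl[OF qp j] abs_mult sign_def del: One_nat_def)
    also have "\<dots> \<le> m * M0^(n-1)"
      by (rule mult_mono) (use v[OF r] R in auto)
    finally show ?thesis by (simp add: mult.commute)
  qed
  have "\<bar>det_n n (repl A j v)\<bar> \<le> (\<Sum>q\<in>?P. \<bar>of_int (sign q) * (\<Prod>i=1..n. repl A j v i (q i))\<bar>)"
    unfolding det_n_def by (rule sum_abs)
  also have "\<dots> \<le> of_nat (card ?P) * (M0^(n-1) * m)"
    by (rule sum_bounded_above) (rule each)
  also have "card ?P = fact n" by (rule card_permutations) auto
  finally show ?thesis by (simp add: mult.assoc)
qed

lemma nonsing_det: "nonsingular n B \<Longrightarrow> \<bar>det_n n B\<bar> \<ge> 1"
  unfolding nonsingular_def by linarith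

lemma x_bound:
  assumes ns: "nonsingular n B" and j: "j \<in> {1..n}"
    and u: "\<And>i. i \<in> {1..n} \<Longrightarrow> \<bar>matvec n B x i\<bar> \<le> m"
    and A: "\<And>i l. i \<in> {1..n} \<Longrightarrow> l \<in> {1..n} \<Longrightarrow> \<bar>B i l\<bar> \<le> M0"
    and M0: "0 \<le> M0"
  shows "\<bar>x j\<bar> \<le> fact n * M0^(n-1) * m"
proof -
  have d: "\<bar>det_n n B\<bar> \<ge> 1" using nonsing_det[OF ns] .
  have "\<bar>x j\<bar> \<le> \<bar>x j\<bar> * \<bar>det_n n B\<bar>" using d
    by (metis abs_ge_zero mult_le_cancel_left1 not_le)
  also have "\<dots> = \<bar>det_n n (repl B j (matvec n B x))\<bar>" by (simp add: cramer[OF j] abs_mult)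
  also have "\<dots> \<le> fact n * M0^(n-1) * m" by (rule det_bound[OF j u A M0])
  finally show ?thesis .
qed

lemma x_zero:
  assumes ns: "nonsingular n B" and j: "j \<in> {1..n}"
    and u: "\<And>i. i \<in> {1..n} \<Longrightarrow> matvec n B x i = 0"
    and A: "\<And>i l. i \<in> {1..n} \<Longrightarrow> l \<in> {1..n} \<Longrightarrow> \<bar>B i l\<bar> \<le> M0"
    and M0: "0 \<le> M0"
  shows "x j = 0"
proof -
  have "\<bar>x j\<bar> \<le> fact n * M0^(n-1) * 0"
    by (rule x_bound[OF ns j _ A M0]) (simp add: u)
  then show ?thesis by simp
qed

definition nz :: "nat \<Rightarrow> (nat \<Rightarrow> nat \<Rightarrow> int) \<Rightarrow> (nat \<Rightarrow> int) \<Rightarrow> bool" where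
  "nz n B0 x \<longleftrightarrow> (\<exists>i\<in>{1..n}. matvec n B0 x i \<noteq> 0)"

lemma one_le_sq: "(z::int) \<noteq> 0 \<Longrightarrow> 1 \<le> z^2"
proof -
  assume "z \<noteq> 0"
  then have "1 \<le> \<bar>z\<bar>" by linarith
  then have "1 \<le> \<bar>z\<bar>^2" by (rule one_le_power)
  then show ?thesis by simp
qed

lemma normsq_nonneg: "normsq n B0 x \<ge> 0"
  unfolding normsq_def by (intro sum_nonneg) auto

lemma normsq_pos: "nz n B0 x \<Longrightarrow> normsq n B0 x \<ge> 1"
proof -
  assume "nz n B0 x"
  then obtain i where i: "i \<in> {1..n}" "matvec n B0 x i \<noteq> 0" unfolding nz_def by blast
  have "1 \<le> (matvec n B0 x i)^2" using i(2) by (rule one_le_sq)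
  also have "\<dots> \<le> normsq n B0 x" unfolding normsq_def
    by (rule member_le_sum) (use i in auto)
  finally show ?thesis .
qed

lemma normsq_ge_comp: "i \<in> {1..n} \<Longrightarrow> (matvec n B0 x i)^2 \<le> normsq n B0 x"
  unfolding normsq_def by (rule member_le_sum) auto

lemma nz_if_pos: "normsq n B0 x > 0 \<Longrightarrow> nz n B0 x"
  unfolding nz_def normsq_def by (metis (no_types, lifting) power_zero_numeral sum.neutral less_irrefl)

lemma lambda1_min:
  assumes x0: "x0 \<in> zvecs n" "nz n B0 x0"
  shows "\<exists>xm. xm \<in> zvecs n \<and> nz n B0 xm \<and> (\<forall>x. x \<in> zvecs n \<and> nz n B0 x \<longrightarrow> normsq n B0 xm \<le> normsq n B0 x)
     \<and> lambda1 n B0 = vlen n B0 xm"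
proof -
  obtain xm where xm: "xm \<in> zvecs n \<and> nz n B0 xm"
    and mn: "\<forall>y. y \<in> zvecs n \<and> nz n B0 y \<longrightarrow> nat (normsq n B0 xm) \<le> nat (normsq n B0 y)"
    using ex_has_least_nat[of "\<lambda>x. x \<in> zvecs n \<and> nz n B0 x" x0 "\<lambda>x. nat (normsq n B0 x)"] x0 by blast
  have mn': "\<forall>x. x \<in> zvecs n \<and> nz n B0 x \<longrightarrow> normsq n B0 xm \<le> normsq n B0 x"
    using mn normsq_nonneg by (metis nat_le_eq_zle)
  have "lambda1 n B0 = vlen n B0 xm"
    unfolding lambda1_def
  proof (rule cInf_eq_minimum)
    show "vlen n B0 xm \<in> {vlen n B0 x |x. x \<in> zvecs n \<and> (\<exists>i\<in>{1..n}. matvec n B0 x i \<noteq> 0)}"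
      using xm unfolding nz_def by blast
    fix v assume "v \<in> {vlen n B0 x |x. x \<in> zvecs n \<and> (\<exists>i\<in>{1..n}. matvec n B0 x i \<noteq> 0)}"
    then obtain x where x: "v = vlen n B0 x" "x \<in> zvecs n" "nz n B0 x" unfolding nz_def by blast
    show "vlen n B0 xm \<le> v" unfolding x(1) vlen_def using mn' x by simp
  qed
  then show ?thesis using xm mn' by blast
qed

lemma SB_iff:
  assumes "lambda1 n B0 = vlen n B0 xm"
  shows "x \<in> SB n B0 \<longleftrightarrow> x \<in> zvecs n \<and> normsq n B0 x = normsq n B0 xm"
  unfolding SB_def assms vlen_def using normsq_nonneg[of n B0] by auto

lemma matvec_Be:
  "matvec n (Beps n B eps) x i = eps (n+1) * matvec n B x i + (if i = 1 then (\<Sum>j=1..n. eps j * x j) else 0)"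
  unfolding matvec_def Beps_def
  by (cases "i = 1") (simp_all add: algebra_simps sum.distrib sum_distrib_left)

lemma normsq_Be:
  assumes n: "n \<ge> 1"
  shows "normsq n (Beps n B eps) x = eps (n+1)^2 * normsq n B x
     + 2 * eps (n+1) * matvec n B x 1 * (\<Sum>j=1..n. eps j * x j) + (\<Sum>j=1..n. eps j * x j)^2"
proof -
  define E where "E = eps (n+1)"
  define s where "s = (\<Sum>j=1..n. eps j * x j)"
  have "normsq n (Beps n B eps) x = (\<Sum>i=1..n. E^2 * (matvec n B x i)^2 + (if i = 1 then 2 * E * matvec n B x i * s + s^2 else 0))"
    unfolding normsq_def matvec_Be E_def[symmetric] s_def[symmetric]
    by (rule sum.cong[OF refl]) (simp add: power2_eq_square algebra_simps)
  also have "\<dots> = E^2 * normsq n B x + (2 * E * matvec n B x 1 * s + s^2)"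
    using n by (simp add: sum.distrib normsq_def sum_distrib_left sum.delta')
  finally show ?thesis unfolding E_def s_def by simp
qed

lemma s_bound:
  assumes ns: "nonsingular n B"
    and u: "\<And>i. i \<in> {1..n} \<Longrightarrow> \<bar>matvec n B x i\<bar> \<le> m"
    and A: "\<And>i l. i \<in> {1..n} \<Longrightarrow> l \<in> {1..n} \<Longrightarrow> \<bar>B i l\<bar> \<le> M0"
    and M0: "0 \<le> M0"
    and e: "\<And>j. j \<in> {1..n} \<Longrightarrow> \<bar>eps j\<bar> \<le> P"
  shows "\<bar>\<Sum>j=1..n. eps j * x j\<bar> \<le> P * (int n * fact n * M0^(n-1)) * m"
proof -
  have "\<bar>\<Sum>j=1..n. eps j * x j\<bar> \<le> (\<Sum>j=1..n. \<bar>eps j * x j\<bar>)" by (rule sum_abs)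
  also have "\<dots> \<le> (\<Sum>j=1..n. P * (fact n * M0^(n-1) * m))"
  proof (rule sum_mono)
    fix j assume j: "j \<in> {1..n}"
    have xb: "\<bar>x j\<bar> \<le> fact n * M0^(n-1) * m" by (rule x_bound[OF ns j u A M0])
    show "\<bar>eps j * x j\<bar> \<le> P * (fact n * M0^(n-1) * m)"
      unfolding abs_mult by (rule mult_mono[OF e[OF j] xb]) (use e[OF j] in auto)
  qed
  also have "\<dots> = P * (int n * fact n * M0^(n-1)) * m" by simp
  finally show ?thesis .
qed

lemma Be_bounds:
  assumes n: "n \<ge> 1" and ns: "nonsingular n B"
    and A: "\<And>i l. i \<in> {1..n} \<Longrightarrow> l \<in> {1..n} \<Longrightarrow> \<bar>B i l\<bar> \<le> Mb"
    and Mb: "0 \<le> Mb" and P: "0 \<le> P" and E: "0 \<le> eps (n+1)"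
    and e: "\<And>j. j \<in> {1..n} \<Longrightarrow> \<bar>eps j\<bar> \<le> P"
  defines "K \<equiv> int n * fact n * Mb^(n-1)"
  shows "eps (n+1)^2 * normsq n B x - 2 * eps (n+1) * P * K * normsq n B x \<le> normsq n (Beps n B eps) x
    \<and> normsq n (Beps n B eps) x \<le> eps (n+1)^2 * normsq n B x + 2 * eps (n+1) * P * K * normsq n B x + P^2 * K^2 * normsq n B x"
proof -
  define E where "E = eps (n+1)"
  define s where "s = (\<Sum>j=1..n. eps j * x j)"
  define U where "U = normsq n B x"
  define c where "c = matvec n B x 1"
  define m where "m = Max ((\<lambda>i. \<bar>matvec n B x i\<bar>) ` {1..n})"
  have um: "\<bar>matvec n B x i\<bar> \<le> m" if "i \<in> {1..n}" for i
    unfolding m_def using that by (intro Max_ge) auto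
  have "m \<in> (\<lambda>i. \<bar>matvec n B x i\<bar>) ` {1..n}" unfolding m_def using n by (intro Max_in) auto
  then obtain i0 where i0: "i0 \<in> {1..n}" "m = \<bar>matvec n B x i0\<bar>" by blast
  have m0: "0 \<le> m" using i0 by simp
  have mU: "m^2 \<le> U" unfolding U_def i0(2) using normsq_ge_comp[OF i0(1)] by simp
  have K0: "0 \<le> K" unfolding K_def using Mb by simp
  have cm: "\<bar>c\<bar> \<le> m" unfolding c_def using um n by simp
  have sb: "\<bar>s\<bar> \<le> P * K * m" unfolding s_def K_def by (rule s_bound[OF ns um A Mb e])
  have "\<bar>c * s\<bar> \<le> m * (P * K * m)" unfolding abs_mult by (rule mult_mono[OF cm sb]) (use m0 in auto)
  also have "\<dots> = (P * K) * m^2" by (simp add: power2_eq_square algebra_simps)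
  also have "\<dots> \<le> (P * K) * U" by (rule mult_left_mono[OF mU]) (use P K0 in simp)
  finally have cs: "\<bar>c * s\<bar> \<le> P * K * U" .
  have "\<bar>2 * E * c * s\<bar> = 2 * E * \<bar>c * s\<bar>" using E unfolding E_def by (simp add: abs_mult)
  also have "\<dots> \<le> 2 * E * (P * K * U)" by (rule mult_left_mono[OF cs]) (use E in \<open>simp add: E_def\<close>)
  finally have cs2: "\<bar>2 * E * c * s\<bar> \<le> 2 * E * P * K * U" by (simp add: algebra_simps)
  have "s^2 = \<bar>s\<bar>^2" by simp
  also have "\<dots> \<le> (P * K * m)^2" by (rule power_mono[OF sb]) simp
  also have "\<dots> = P^2 * K^2 * m^2" by (simp add: power_mult_distrib)
  also have "\<dots> \<le> P^2 * K^2 * U" by (rule mult_left_mono[OF mU]) simp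
  finally have ss: "s^2 \<le> P^2 * K^2 * U" .
  have N: "normsq n (Beps n B eps) x = E^2 * U + 2 * E * c * s + s^2"
    unfolding E_def U_def c_def s_def using normsq_Be[OF n] by simp
  have s0: "0 \<le> s^2" by simp
  show ?thesis unfolding N E_def[symmetric] U_def[symmetric] using cs2 ss s0 by linarith
qed

lemma fact_le_pow: "n \<ge> 1 \<Longrightarrow> fact n \<le> (n::nat)^(n-1)"
proof (induction n)
  case 0 then show ?case by simp
next
  case (Suc m)
  show ?case
  proof (cases "m = 0")
    case True then show ?thesis by simp
  next
    case False
    then have "fact m \<le> m^(m-1)" using Suc by simp
    also have "\<dots> \<le> (Suc m)^(m-1)" by (rule power_mono) auto
    finally have "Suc m * fact m \<le> Suc m * (Suc m)^(m-1)" by (rule mult_left_mono) simp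
    also have "\<dots> = (Suc m)^m" using False by (cases m) auto
    finally show ?thesis by simp
  qed
qed

lemma sq_sum: "(\<Sum>i=1..(n::nat). (f i::int))^2 = (\<Sum>i=1..n. (f i)^2) + (\<Sum>i=1..n. \<Sum>j\<in>{i<..n}. 2 * f i * f j)"
proof (induction n)
  case 0 then show ?case by simp
next
  case (Suc n)
  have inner: "(\<Sum>i=1..Suc n. \<Sum>j\<in>{i<..Suc n}. 2 * f i * f j)
      = (\<Sum>i=1..n. \<Sum>j\<in>{i<..n}. 2 * f i * f j) + 2 * (\<Sum>i=1..n. f i) * f (Suc n)"
  proof -
    have "(\<Sum>i=1..Suc n. \<Sum>j\<in>{i<..Suc n}. 2 * f i * f j) = (\<Sum>i=1..n. \<Sum>j\<in>{i<..Suc n}. 2 * f i * f j)"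
      by simp
    also have "\<dots> = (\<Sum>i=1..n. (\<Sum>j\<in>{i<..n}. 2 * f i * f j) + 2 * f i * f (Suc n))"
    proof (rule sum.cong[OF refl])
      fix i assume "i \<in> {1..n}"
      then have "{i<..Suc n} = insert (Suc n) {i<..n}" by auto
      then show "(\<Sum>j\<in>{i<..Suc n}. 2 * f i * f j) = (\<Sum>j\<in>{i<..n}. 2 * f i * f j) + 2 * f i * f (Suc n)"
        by simp
    qed
    also have "\<dots> = (\<Sum>i=1..n. \<Sum>j\<in>{i<..n}. 2 * f i * f j) + 2 * (\<Sum>i=1..n. f i) * f (Suc n)"
      by (simp add: sum.distrib sum_distrib_left sum_distrib_right algebra_simps)
    finally show ?thesis .
  qed
  show ?case unfolding inner using Suc.IH
    by (simp add: power2_eq_square algebra_simps)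
qed

lemma final_arith:
  fixes p K L Q M n :: int
  assumes "0 \<le> K" "K \<le> Q" "0 \<le> M" "K * M \<le> Q" "1 \<le> n" "n \<le> Q" "L \<le> n * M^2" "0 \<le> L"
    "n * M \<le> Q" "16 * Q^2 < p"
  shows "2 * K * (2 * L + 1) + K^2 * L < p^2"
proof -
  have Q1: "1 \<le> Q" using assms by linarith
  have "K^2 * L \<le> K^2 * (n * M^2)" by (rule mult_left_mono) (use assms in auto)
  also have "\<dots> = n * (K * M)^2" by (simp add: power_mult_distrib algebra_simps)
  also have "\<dots> \<le> Q * Q^2" by (rule mult_mono) (use assms in \<open>auto intro: power_mono\<close>)
  finally have a: "K^2 * L \<le> Q^3" by (simp add: power_numeral_reduce)
  have "L \<le> n * M^2" by fact
  also have "\<dots> \<le> n * n * M^2" by (rule mult_right_mono) (use assms in auto)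
  also have "\<dots> = (n * M)^2" by (simp add: power2_eq_square)
  also have "\<dots> \<le> Q^2" by (rule power_mono) (use assms in auto)
  finally have LQ: "L \<le> Q^2" .
  have "2 * K * (2 * L + 1) \<le> 2 * Q * (2 * Q^2 + 1)" by (rule mult_mono) (use assms LQ in auto)
  moreover have "Q \<le> Q^3" using Q1 by (simp add: power_numeral_reduce) (metis mult_le_cancel_left1 one_le_power power2_eq_square less_le_trans not_le zero_less_one)
  ultimately have b: "2 * K * (2 * L + 1) \<le> 6 * Q^3" by (simp add: algebra_simps power_numeral_reduce)
  have "7 * Q^3 \<le> 256 * Q^4" using Q1 by (simp add: power_numeral_reduce)
  also have "256 * Q^4 = (16 * Q^2)^2" by (simp add: power_mult_distrib flip: power_mult)
  also have "\<dots> < p^2" by (rule power_strict_mono) (use assms Q1 in auto)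
  finally show ?thesis using a b by linarith
qed

lemma key_ineq:
  fixes E P K L U Nx Ny p :: int
  assumes pE: "p^2 * P \<le> E" and P1: "1 \<le> P" and K0: "0 \<le> K"
    and pb: "2*K*(2*L+1) + K^2*L < p^2" and L0: "0 \<le> L" and p1: "1 \<le> p"
    and lo: "E^2*U - 2*E*P*K*U \<le> Nx" and up: "Ny \<le> E^2*L + 2*E*P*K*L + P^2*K^2*L"
    and NN: "Nx \<le> Ny" and LU: "L \<le> U"
  shows "U \<le> L"
proof (rule ccontr)
  assume "\<not> U \<le> L"
  then have U1: "L + 1 \<le> U" by simp
  have p2: "1 \<le> p^2" using p1 by (simp add: one_le_power)
  have PE: "P \<le> E" proof -
    have "1 * P \<le> p^2 * P" by (rule mult_right_mono[OF p2]) (use P1 in simp)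
    then show ?thesis using pE by simp
  qed
  have E0: "0 < E" using PE P1 by linarith
  have twoK: "2 * K < p^2"
  proof -
    have "2 * K \<le> 2 * K * (2 * L + 1)" using K0 L0 by (simp add: mult_le_cancel_left1)
    moreover have "0 \<le> K^2 * L" using L0 by simp
    ultimately show ?thesis using pb by linarith
  qed
  have "P * (2 * K) \<le> P * p^2" by (rule mult_left_mono) (use twoK P1 in auto)
  then have "0 \<le> E - 2 * P * K" using pE by (simp add: algebra_simps)
  then have D0: "0 \<le> E^2 - 2*E*P*K"
  proof -
    have "0 \<le> E * (E - 2 * P * K)" using E0 \<open>0 \<le> E - 2 * P * K\<close> by simp
    then show ?thesis by (simp add: power2_eq_square algebra_simps)
  qed
  have "(L+1) * (E^2 - 2*E*P*K) \<le> U * (E^2 - 2*E*P*K)" by (rule mult_right_mono[OF U1 D0])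
  also have "\<dots> = E^2*U - 2*E*P*K*U" by (simp add: algebra_simps)
  finally have "(L+1) * (E^2 - 2*E*P*K) \<le> E^2*L + 2*E*P*K*L + P^2*K^2*L" using lo NN up by linarith
  then have st: "E^2 \<le> E*P*(2*K*(2*L+1)) + P^2*K^2*L" by (simp add: algebra_simps)
  have "P^2*K^2*L \<le> E*P*(K^2*L)"
  proof -
    have "P*(P*(K^2*L)) \<le> E*(P*(K^2*L))" by (rule mult_right_mono[OF PE]) (use P1 L0 in simp)
    then show ?thesis by (simp add: power2_eq_square algebra_simps)
  qed
  moreover have "E*(p^2*P) \<le> E^2" using pE E0 by (simp add: power2_eq_square)
  ultimately have "E*P*p^2 \<le> E*P*(2*K*(2*L+1) + K^2*L)" using st by (simp add: algebra_simps)
  then have "p^2 \<le> 2*K*(2*L+1) + K^2*L" using E0 P1 by simp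
  then show False using pb by simp
qed



lemma e1_mv: "matvec n B (\<lambda>i::nat. if i = 1 then 1 else (0::int)) i = (if n \<ge> 1 then B i 1 else 0)"
  unfolding matvec_def by (simp add: if_distrib[of "\<lambda>x. B i _ * x"] cong: if_cong) 

theorem mainTheorem5:
  fixes n :: nat and B :: "nat \<Rightarrow> nat \<Rightarrow> int" and a :: "nat \<Rightarrow> nat"
  assumes "n \<ge> 1"
    and "nonsingular n B"
    and "admissible_exps n a"
  defines "M \<equiv> maxentry n B"
  defines "p \<equiv> constp n M"
  defines "eps \<equiv> (\<lambda>i. p ^ a i)"
  defines "Be \<equiv> Beps n B eps"
  shows "SB n Be \<subseteq> SB n B \<and>
    (\<forall>x\<in>SB n Be.
      (lambda1 n Be)^2 = real_of_int
        (normsq n B x * eps (n+1)^2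
         + (\<Sum>i=1..n. (x i)^2 * (eps i)^2)
         + (\<Sum>i=1..n. 2 * (\<Sum>k=1..n. B 1 k * x k) * x i * eps (n+1) * eps i)
         + (\<Sum>i=1..n. \<Sum>j\<in>{i<..n}. 2 * x i * x j * eps i * eps j))
      \<and> \<bar>normsq n B x\<bar> \<le> p div 2
      \<and> (\<forall>i\<in>{1..n}. \<bar>(x i)^2\<bar> \<le> p div 2)
      \<and> (\<forall>i\<in>{1..n}. \<bar>2 * (\<Sum>k=1..n. B 1 k * x k) * x i\<bar> \<le> p div 2)
      \<and> (\<forall>i\<in>{1..n}. \<forall>j\<in>{1..n}. i < j \<longrightarrow> \<bar>2 * x i * x j\<bar> \<le> p div 2))
    \<and> (\<forall>i j. 1 \<le> i \<and> i \<le> j \<and> j \<le> n+1 \<longrightarrow> (\<exists>e::nat. eps i * eps j = p ^ e))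
    \<and> (\<forall>i j k l. 1 \<le> i \<and> i \<le> j \<and> j \<le> n+1 \<and> 1 \<le> k \<and> k \<le> l \<and> l \<le> n+1
        \<and> (i,j) \<noteq> (k,l) \<longrightarrow> eps i * eps j \<noteq> eps k * eps l)"
proof -
  have n1: "n \<ge> 1" by fact
  have ns: "nonsingular n B" by fact
  define MS where "MS = {\<bar>B i j\<bar> | i j. i \<in> {1..n} \<and> j \<in> {1..n}}"
  have finMS: "finite MS" unfolding MS_def by (rule finite_image_set2) auto
  have Mdef: "M = Max MS" unfolding M_def maxentry_def MS_def ..
  have Bb: "\<And>i l. i \<in> {1..n} \<Longrightarrow> l \<in> {1..n} \<Longrightarrow> \<bar>B i l\<bar> \<le> M"
    unfolding Mdef using finMS by (intro Max_ge) (auto simp: MS_def)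
  have M0: "0 \<le> M" using Bb[of 1 1] n1 by force
  define M1 where "M1 = constM1 n M"
  define M2 where "M2 = constM2 n M"
  define Mx where "Mx = Max {M2^2, 2*M1*M2, 2*M1^2}"
  have pdef: "p = 2*Mx + 1" unfolding p_def constp_def Mx_def M1_def M2_def ..
  have hMx: "M2^2 \<le> Mx" "2*M1*M2 \<le> Mx" "2*M1^2 \<le> Mx" unfolding Mx_def by auto
  have pdiv: "p div 2 = Mx" unfolding pdef by simp
  define Q where "Q = (M+1)^n * int n^n"
  have M1Q: "M1 = 2*Q" unfolding M1_def constM1_def Q_def by simp
  have M2d: "M2 = (M+1) * int n" unfolding M2_def constM2_def ..
  have Mp1: "1 \<le> (M+1)^n" using M0 by (simp add: one_le_power)
  have nn1: "1 \<le> int n^n" using n1 by (simp add: one_le_power)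
  have Q1: "1 \<le> Q" unfolding Q_def using mult_mono[OF Mp1 nn1] Mp1 by simp
  have p16: "16*Q^2 < p" using hMx(3) unfolding M1Q pdef by (simp add: power_mult_distrib)
  have "1 \<le> Q^2" using Q1 by (simp add: one_le_power)
  then have p1: "1 < p" using p16 by linarith
  define K where "K = int n * fact n * M^(n-1)"
  have fn: "int n * fact n \<le> int n ^ n"
  proof -
    have "n * fact n \<le> n * n^(n-1)" using fact_le_pow[OF n1] by simp
    also have "\<dots> = n^n" using n1 by (cases n) auto
    finally have "int (n * fact n) \<le> int (n^n)" by (rule of_nat_mono)
    then show ?thesis by (simp add: of_nat_fact)
  qed
  have K0: "0 \<le> K" unfolding K_def using M0 by simp
  have Mn: "M^(n-1) * M = M^n" using n1 by (cases n) (simp_all add: mult.commute)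
  have KM: "K * M \<le> Q"
  proof -
    have "K * M = (int n * fact n) * M^n" unfolding K_def using Mn by (simp add: algebra_simps)
    also have "\<dots> \<le> int n^n * (M+1)^n" by (rule mult_mono[OF fn]) (use M0 in \<open>auto intro: power_mono\<close>)
    finally show ?thesis unfolding Q_def by (simp add: mult.commute)
  qed
  have KQ: "K \<le> Q"
  proof -
    have "M^(n-1) \<le> (M+1)^(n-1)" by (rule power_mono) (use M0 in auto)
    also have "\<dots> \<le> (M+1)^n" by (rule power_increasing) (use M0 in auto)
    finally have "M^(n-1) \<le> (M+1)^n" .
    then have "K \<le> int n^n * (M+1)^n" unfolding K_def by (rule mult_mono[OF fn]) (use M0 in auto)
    then show ?thesis unfolding Q_def by (simp add: mult.commute)
  qed
  have nnn: "int n \<le> int n^n"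
  proof -
    have "int n^1 \<le> int n^n" by (rule power_increasing) (use n1 in auto)
    then show ?thesis by simp
  qed
  have MM: "M \<le> (M+1)^n"
  proof -
    have "(M+1)^1 \<le> (M+1)^n" by (rule power_increasing) (use n1 M0 in auto)
    then show ?thesis by simp
  qed
  have nMQ: "int n * M \<le> Q" unfolding Q_def
    using mult_mono[OF nnn MM] M0 by (simp add: mult.commute)
  have nQ: "int n \<le> Q" unfolding Q_def using mult_mono[OF nnn Mp1] nn1 by (simp add: mult.commute)
  have adm: "\<forall>i\<in>{1..n+1}. \<forall>j\<in>{1..n+1}. i < j \<longrightarrow> a i < a j"
     "\<forall>i j k l. 1 \<le> i \<and> i \<le> j \<and> j \<le> n+1 \<and> 1 \<le> k \<and> k \<le> l \<and> l \<le> n+1 \<and> (i,j) \<noteq> (k,l)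
        \<longrightarrow> a i + a j \<noteq> a k + a l" "a (n+1) \<ge> a n + 2"
    using assms(3) unfolding admissible_exps_def by auto
  have aj: "a j \<le> a n" if "j \<in> {1..n}" for j
    using adm(1) that n1 by (cases "j = n") (auto intro: less_imp_le)
  define P where "P = p^(a n)"
  have P1: "1 \<le> P" unfolding P_def using p1 by (simp add: one_le_power)
  have epsj: "\<bar>eps j\<bar> \<le> P" if "j \<in> {1..n}" for j
    unfolding eps_def P_def using p1 aj[OF that] by (simp add: power_increasing)
  have E0: "0 \<le> eps (n+1)" unfolding eps_def using p1 by simp
  have pE: "p^2 * P \<le> eps (n+1)"
  proof -
    have "p^2 * P = p^(a n + 2)" unfolding P_def by (simp add: power_add power2_eq_square)
    also have "\<dots> \<le> p^(a (n+1))" by (rule power_increasing) (use adm(3) p1 in auto)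
    finally show ?thesis unfolding eps_def .
  qed
  have BB: "eps (n+1)^2 * normsq n B x - 2 * eps (n+1) * P * K * normsq n B x \<le> normsq n Be x
    \<and> normsq n Be x \<le> eps (n+1)^2 * normsq n B x + 2 * eps (n+1) * P * K * normsq n B x + P^2 * K^2 * normsq n B x" for x
    unfolding Be_def K_def by (rule Be_bounds[where eps=eps and P=P and Mb=M and x=x, OF n1 ns Bb M0 _ E0 epsj]) (use P1 in auto)
  define e1 where "e1 = (\<lambda>i::nat. if i = 1 then 1 else (0::int))"
  have e1z: "e1 \<in> zvecs n" unfolding e1_def zvecs_def using n1 by auto
  have mve1: "matvec n B e1 i = B i 1" for i unfolding e1_def e1_mv using n1 by simp
  have nze1: "nz n B e1"
  proof (rule ccontr)
    assume "\<not> nz n B e1"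
    then have "e1 1 = 0" using x_zero[OF ns _ _ Bb M0, of 1 e1] n1 unfolding nz_def by auto
    then show False unfolding e1_def by simp
  qed
  obtain y where y: "y \<in> zvecs n" "nz n B y"
    "\<forall>x. x \<in> zvecs n \<and> nz n B x \<longrightarrow> normsq n B y \<le> normsq n B x" "lambda1 n B = vlen n B y"
    using lambda1_min[OF e1z nze1] by blast
  define L where "L = normsq n B y"
  have L1: "1 \<le> L" unfolding L_def by (rule normsq_pos[OF y(2)])
  have Lb: "L \<le> int n * M^2"
  proof -
    have "L \<le> normsq n B e1" unfolding L_def using y(3) e1z nze1 by blast
    also have "\<dots> = (\<Sum>i=1..n. (B i 1)^2)" unfolding normsq_def mve1 ..
    also have "\<dots> \<le> of_nat (card {1..n}) * M^2"
    proof (rule sum_bounded_above)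
      fix i assume i: "i \<in> {1..n}"
      have "\<bar>B i 1\<bar> \<le> M" using Bb[OF i] n1 by simp
      then have "\<bar>B i 1\<bar>^2 \<le> M^2" by (rule power_mono) simp
      then show "(B i 1)^2 \<le> M^2" by simp
    qed
    finally show ?thesis by simp
  qed
  have pb: "2 * K * (2 * L + 1) + K^2 * L < p^2"
    by (rule final_arith[OF K0 KQ M0 KM _ nQ Lb _ nMQ p16]) (use n1 L1 in auto)
  have twoK: "2 * K < p^2"
  proof -
    have "2 * K \<le> 2 * K * (2 * L + 1)" using K0 L1 by (simp add: mult_le_cancel_left1)
    moreover have "0 \<le> K^2 * L" using L1 by simp
    ultimately show ?thesis using pb by linarith
  qed
  have EP: "0 < eps (n+1) - 2 * P * K"
  proof -
    have "P * (2 * K) < P * p^2" by (rule mult_strict_left_mono) (use twoK P1 in auto)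
    then show ?thesis using pE by (simp add: algebra_simps)
  qed
  have Npos: "0 < normsq n Be y"
  proof -
    have "0 \<le> 2 * P * K" using P1 K0 by simp
    then have "0 < eps (n+1)" using EP by linarith
    then have "0 < eps (n+1) * (eps (n+1) - 2 * P * K)" using EP by simp
    then have "0 < L * (eps (n+1) * (eps (n+1) - 2 * P * K))" using L1 by simp
    then show ?thesis using BB[of y] unfolding L_def by (simp add: algebra_simps power2_eq_square)
  qed
  have nzy: "nz n Be y" by (rule nz_if_pos[OF Npos])
  obtain ym where ym: "ym \<in> zvecs n" "nz n Be ym"
    "\<forall>x. x \<in> zvecs n \<and> nz n Be x \<longrightarrow> normsq n Be ym \<le> normsq n Be x" "lambda1 n Be = vlen n Be ym"
    using lambda1_min[OF y(1) nzy] by blast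
  have main: "x \<in> zvecs n \<and> normsq n B x = L \<and> normsq n Be x = normsq n Be ym" if x: "x \<in> SB n Be" for x
  proof -
    have xz: "x \<in> zvecs n" and Nx: "normsq n Be x = normsq n Be ym" using x SB_iff[OF ym(4)] by auto
    have "0 < normsq n Be x" using Nx normsq_pos[OF ym(2)] by simp
    then have nzBex: "nz n Be x" by (rule nz_if_pos)
    have nzBx: "nz n B x"
    proof (rule ccontr)
      assume "\<not> nz n B x"
      then have x0: "x j = 0" if "j \<in> {1..n}" for j
        using x_zero[OF ns that _ Bb M0, of x] unfolding nz_def by auto
      have "matvec n Be x i = 0" for i unfolding matvec_def using x0 by simp
      then show False using nzBex unfolding nz_def by simp
    qed
    have LU: "L \<le> normsq n B x" unfolding L_def using y(3) xz nzBx by blast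
    have NN: "normsq n Be x \<le> normsq n Be y" using Nx ym(3) y(1) nzy by auto
    have "normsq n B x \<le> L"
      by (rule key_ineq[OF pE P1 K0 pb _ _ _ _ NN LU]) (use L1 p1 BB[of x] BB[of y] in \<open>auto simp: L_def\<close>)
    then show ?thesis using LU xz Nx by simp
  qed
  have sub: "SB n Be \<subseteq> SB n B"
  proof
    fix x assume "x \<in> SB n Be"
    then show "x \<in> SB n B" using main SB_iff[OF y(4)] unfolding L_def by blast
  qed
  have M2sq: "int n * M^2 \<le> M2^2"
  proof -
    have "int n * M^2 \<le> (int n * int n) * (M+1)^2"
      by (rule mult_mono) (use n1 M0 in \<open>auto intro: power_mono\<close>)
    then show ?thesis unfolding M2d by (simp add: power2_eq_square algebra_simps)
  qed
  have nM2: "int n * M \<le> M2" unfolding M2d using n1 by (simp add: algebra_simps)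
  have QQ: "0 \<le> Q * Q" using Q1 by simp
  have "2*M1^2 = 8*(Q*Q)" unfolding M1Q by (simp add: power2_eq_square)
  then have "8*(Q*Q) \<le> Mx" using hMx(3) by simp
  then have Q8: "Q^2 \<le> Mx" "2 * Q * Q \<le> Mx" using QQ unfolding power2_eq_square mult.assoc by linarith+
  have fb: "(lambda1 n Be)^2 = real_of_int
        (normsq n B x * eps (n+1)^2
         + (\<Sum>i=1..n. (x i)^2 * (eps i)^2)
         + (\<Sum>i=1..n. 2 * (\<Sum>k=1..n. B 1 k * x k) * x i * eps (n+1) * eps i)
         + (\<Sum>i=1..n. \<Sum>j\<in>{i<..n}. 2 * x i * x j * eps i * eps j))
      \<and> \<bar>normsq n B x\<bar> \<le> p div 2
      \<and> (\<forall>i\<in>{1..n}. \<bar>(x i)^2\<bar> \<le> p div 2)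
      \<and> (\<forall>i\<in>{1..n}. \<bar>2 * (\<Sum>k=1..n. B 1 k * x k) * x i\<bar> \<le> p div 2)
      \<and> (\<forall>i\<in>{1..n}. \<forall>j\<in>{1..n}. i < j \<longrightarrow> \<bar>2 * x i * x j\<bar> \<le> p div 2)"
    if x: "x \<in> SB n Be" for x
  proof -
    have xz: "x \<in> zvecs n" and Ux: "normsq n B x = L" and Nx: "normsq n Be x = normsq n Be ym"
      using main[OF x] by auto
    have ub: "\<bar>matvec n B x i\<bar> \<le> int n * M" if i: "i \<in> {1..n}" for i
    proof -
      have "(matvec n B x i)^2 \<le> L" using normsq_ge_comp[OF i, of B x] Ux by simp
      also have "\<dots> \<le> int n * M^2" by (rule Lb)
      also have "\<dots> \<le> int n * int n * M^2" by (rule mult_right_mono) (use n1 in auto)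
      also have "\<dots> = (int n * M)^2" by (simp add: power2_eq_square)
      finally have "(matvec n B x i)^2 \<le> (int n * M)^2" .
      then have "\<bar>matvec n B x i\<bar> \<le> \<bar>int n * M\<bar>" by (simp only: abs_le_square_iff)
      then show ?thesis using M0 by simp
    qed
    have xb: "\<bar>x j\<bar> \<le> Q" if j: "j \<in> {1..n}" for j
    proof -
      have "\<bar>x j\<bar> \<le> fact n * M^(n-1) * (int n * M)" by (rule x_bound[OF ns j ub Bb M0])
      also have "\<dots> = K * M" unfolding K_def by (simp add: algebra_simps)
      finally show ?thesis using KM by simp
    qed
    have c_eq: "(\<Sum>k=1..n. B 1 k * x k) = matvec n B x 1" by (simp add: matvec_def)
    have cb: "\<bar>matvec n B x 1\<bar> \<le> int n * M" using ub n1 by simp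
    define E where "E = eps (n+1)"
    define s where "s = (\<Sum>j=1..n. eps j * x j)"
    have N1: "normsq n Be x = E^2 * normsq n B x + 2 * E * matvec n B x 1 * s + s^2"
      unfolding Be_def E_def s_def by (rule normsq_Be[OF n1])
    have s2: "s^2 = (\<Sum>i=1..n. (x i)^2 * (eps i)^2) + (\<Sum>i=1..n. \<Sum>j\<in>{i<..n}. 2 * x i * x j * eps i * eps j)"
      unfolding s_def sq_sum[of "\<lambda>j. eps j * x j"]
      by (simp add: power_mult_distrib algebra_simps)
    have cs: "2 * E * matvec n B x 1 * s = (\<Sum>i=1..n. 2 * (\<Sum>k=1..n. B 1 k * x k) * x i * eps (n+1) * eps i)"
      unfolding s_def c_eq E_def by (simp add: sum_distrib_left algebra_simps)
    have Nform: "normsq n Be x = normsq n B x * eps (n+1)^2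
         + (\<Sum>i=1..n. (x i)^2 * (eps i)^2)
         + (\<Sum>i=1..n. 2 * (\<Sum>k=1..n. B 1 k * x k) * x i * eps (n+1) * eps i)
         + (\<Sum>i=1..n. \<Sum>j\<in>{i<..n}. 2 * x i * x j * eps i * eps j)"
      unfolding N1 s2 cs[symmetric] E_def by (simp add: algebra_simps)
    have lam: "(lambda1 n Be)^2 = real_of_int (normsq n Be x)"
      unfolding ym(4) vlen_def Nx using normsq_nonneg[of n Be ym] by simp
    have b1: "\<bar>normsq n B x\<bar> \<le> p div 2" unfolding Ux pdiv using L1 Lb M2sq hMx(1) by simp
    have b2: "\<bar>(x i)^2\<bar> \<le> p div 2" if i: "i \<in> {1..n}" for i
    proof -
      have "\<bar>x i\<bar>^2 \<le> Q^2" by (rule power_mono[OF xb[OF i]]) simp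
      then show ?thesis unfolding pdiv using Q8 by simp
    qed
    have b3: "\<bar>2 * (\<Sum>k=1..n. B 1 k * x k) * x i\<bar> \<le> p div 2" if i: "i \<in> {1..n}" for i
    proof -
      have "\<bar>matvec n B x 1\<bar> * \<bar>x i\<bar> \<le> M2 * M1"
        by (rule mult_mono) (use cb nM2 xb[OF i] M1Q Q1 in auto)
      then show ?thesis unfolding pdiv c_eq abs_mult using hMx(2) by (simp add: algebra_simps)
    qed
    have b4: "\<bar>2 * x i * x j\<bar> \<le> p div 2" if i: "i \<in> {1..n}" and j: "j \<in> {1..n}" for i j
    proof -
      have "\<bar>x i\<bar> * \<bar>x j\<bar> \<le> Q * Q"
        by (rule mult_mono) (use xb[OF i] xb[OF j] Q1 in auto)
      then show ?thesis unfolding pdiv abs_mult using Q8(2) by simp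
    qed
    show ?thesis using lam Nform b1 b2 b3 b4 by simp
  qed
  have pw: "eps i * eps j = p ^ (a i + a j)" for i j unfolding eps_def by (simp add: power_add)
  have dist: "eps i * eps j \<noteq> eps k * eps l"
    if "1 \<le> i \<and> i \<le> j \<and> j \<le> n+1 \<and> 1 \<le> k \<and> k \<le> l \<and> l \<le> n+1 \<and> (i,j) \<noteq> (k,l)" for i j k l
  proof
    assume "eps i * eps j = eps k * eps l"
    then have "a i + a j = a k + a l" unfolding pw using p1 by simp
    then show False using adm(2) that by blast
  qed
  show ?thesis using sub fb pw dist by blast
qed

end
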